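(* Let $$f(z)=\frac{1-z-z^2-\sqrt{5z^4+10z^3-z^2-6z+1}}{2-2z-2z^2},$$ where the square root is the formal power series with constant term $1$. Then for every positive integer $n$, the Riordan matrix $\left(\left(\frac{1}{1-z-z^2}\right)^n, f(z)\right)$ is a pseudo-involution.
   Context: A Riordan matrix is a pair $(g(z),f(z))$ of formal power series over $\mathbb{C}$ with $g(z)=\sum_{n\ge 0} g_n z^n$, $g_0\neq 0$, and $f(z)=\sum_{n\ge 1} f_n z^n$ with $f_1\neq 0$; it represents the infinite lower-triangular matrix whose $k$-th column ($k\ge 0$) has generating function $g(z)f(z)^k$. Riordan matrices form a group under matrix multiplication, where $(g(z),f(z))*(h(z),l(z))=(g(z)h(f(z)),\,l(f(z)))$ and the identity is $(1,z)$. Let $M=(1,-z)$. A Riordan matrix $L$ is called a pseudo-involution if $(L*M)*(L*M)=(1,z)$. *)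

theory Defs
  imports "HOL-Computational_Algebra.Formal_Power_Series"
begin

type_synonym riordan = "complex fps \<times> complex fps"

definition is_riordan :: "riordan \<Rightarrow> bool" where
  "is_riordan L \<longleftrightarrow> fps_nth (fst L) 0 \<noteq> 0 \<and> fps_nth (snd L) 0 = 0 \<and> fps_nth (snd L) 1 \<noteq> 0"

definition riordan_mult :: "riordan \<Rightarrow> riordan \<Rightarrow> riordan" (infixl \<open>**\<^sub>R\<close> 70) where
  "riordan_mult L K = (fst L * (fst K oo snd L), snd K oo snd L)"

definition riordan_id :: riordan where
  "riordan_id = (1, fps_X)"

definition riordan_M :: riordan where
  "riordan_M = (1, - fps_X)"

definition pseudo_involution :: "riordan \<Rightarrow> bool" where
  "pseudo_involution L \<longleftrightarrow> is_riordan L \<and>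
     (L **\<^sub>R riordan_M) **\<^sub>R (L **\<^sub>R riordan_M) = riordan_id"

text \<open>Formal square root with constant term 1.\<close>
definition fps_sqrt1 :: "complex fps \<Rightarrow> complex fps" where
  "fps_sqrt1 a = fps_radical (\<lambda>_ _. 1) 2 a"

end

theory Submission
  imports Defs
begin

unbundle fps_syntax

theorem mainTheorem12:
  fixes n :: nat
  assumes "n \<ge> 1"
  defines "F \<equiv> (1 - fps_X - fps_X^2
      - fps_sqrt1 (5 * fps_X^4 + 10 * fps_X^3 - fps_X^2 - 6 * fps_X + 1))
      / (2 - 2 * fps_X - 2 * fps_X^2)"
  shows "pseudo_involution ((inverse (1 - fps_X - fps_X^2 :: complex fps)) ^ n, F)"
proof -
  define h :: "complex fps" where "h = 1 - fps_X - fps_X^2"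
  define s :: "complex fps" where "s = fps_X + fps_X^2"
  define D :: "complex fps" where "D = 5 * fps_X^4 + 10 * fps_X^3 - fps_X^2 - 6 * fps_X + 1"
  define S where "S = fps_sqrt1 D"
  have hs: "h = 1 - s" by (simp add: h_def s_def)
  have h0: "h $ 0 = 1" by (simp add: h_def)
  have s0: "s $ 0 = 0" by (simp add: s_def)
  have D0: "D $ 0 = 1" by (simp add: D_def)
  have S0: "S $ 0 = 1" by (simp add: S_def fps_sqrt1_def)
  have S2: "S^2 = D"
    using power_radical[of D "\<lambda>_ _. 1" 1] D0 by (simp add: S_def fps_sqrt1_def numeral_2_eq_2)
  have Dh: "D = h^2 - 4*h*s"
    unfolding D_def h_def s_def by (simp add: algebra_simps power2_eq_square power3_eq_cube power4_eq_xxxx)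
  have Fd: "F * (2*h) = h - S"
  proof -
    have e: "(2 - 2 * fps_X - 2 * fps_X^2 :: complex fps) = 2*h" by (simp add: h_def algebra_simps)
    have "(2*h) $ 0 \<noteq> 0" using h0 by simp
    then show ?thesis unfolding F_def e S_def D_def[symmetric]
      by (simp add: fps_divide_unit inverse_mult_eq_1 h_def mult.assoc)
  qed
  have Fq: "h * F^2 - h * F + s = 0"
  proof -
    have "S = h - 2*h*F" using Fd by (simp add: algebra_simps)
    then have "(h - 2*h*F)^2 = h^2 - 4*h*s" using S2 Dh by simp
    then have "(4*h) * (h * F^2 - h * F + s) = 0" by (simp add: algebra_simps power2_eq_square)
    moreover have "4*h \<noteq> 0" using h0 by (metis fps_mult_nth_0 fps_zero_nth mult_eq_0_iff zero_neq_numeral one_neq_zero)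
    ultimately show ?thesis by simp
  qed
  have F0: "F $ 0 = 0" using arg_cong[OF Fd, of "\<lambda>x. x $ 0"] h0 S0 by simp
  have h1: "h $ 1 = -1" by (simp add: h_def power2_eq_square fps_mult_nth_1)
  have s1: "s $ 1 = 1" by (simp add: s_def power2_eq_square fps_mult_nth_1)
  have F1: "F $ 1 = 1"
  proof -
    have "(h * F^2 - h * F + s) $ 1 = 0" using Fq by simp
    then show ?thesis using h0 h1 s1 F0 by (simp add: power2_eq_square fps_mult_nth_1)
  qed
  define u where "u = - F"
  have u0: "u $ 0 = 0" using F0 by (simp add: u_def)
  define g where "g = inverse h ^ n"
  have g0: "g $ 0 = 1" using h0 by (simp add: g_def fps_nth_power_0)
  have LM: "(inverse h ^ n, F) **\<^sub>R riordan_M = (g, u)"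
    using F0 by (simp add: riordan_mult_def riordan_M_def g_def u_def fps_compose_uminus)
  have hu: "h oo u = 1 - u - u^2"
    by (simp add: h_def fps_compose_sub_distrib fps_compose_power[OF u0, symmetric] u0)
  have hk: "h * (h oo u) = 1"
  proof -
    have "h * (h oo u) = h - (h * F^2 - h*F) " by (simp only: hu) (simp add: u_def algebra_simps power2_eq_square)
    also have "\<dots> = h + s" using Fq by (simp add: algebra_simps)
    finally show ?thesis by (simp add: hs)
  qed
  have k0: "(h oo u) $ 0 \<noteq> 0" using h0 by simp
  have ik: "inverse (h oo u) = h"
  proof -
    have "inverse (h oo u) = inverse (h oo u) * ((h oo u) * h)" using hk by (simp add: mult.commute)
    also have "\<dots> = (inverse (h oo u) * (h oo u)) * h" by (simp add: mult.assoc)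
    also have "\<dots> = h" using inverse_mult_eq_1[OF k0] by simp
    finally show ?thesis .
  qed
  have gc: "g * (g oo u) = 1"
  proof -
    have "g oo u = (inverse h oo u) ^ n" by (simp add: g_def fps_compose_power[OF u0])
    also have "\<dots> = h ^ n" using fps_inverse_compose[OF u0, of h] h0 ik by simp
    finally have "g * (g oo u) = (inverse h * h) ^ n" by (simp add: g_def power_mult_distrib)
    then show ?thesis using inverse_mult_eq_1[of h] h0 by simp
  qed
  define t where "t = u + u^2"
  define w where "w = u oo u"
  have w0: "w $ 0 = 0" using u0 by (simp add: w_def)
  have R: "(1 - s) * t + s = 0" using Fq unfolding t_def u_def hs by (simp add: algebra_simps power2_eq_square)
  have R2: "(1 - t) * (w + w^2) + t = 0"
  proof -
    have "((1 - s) * t + s) oo u = 0" using R by simp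
    moreover have "s oo u = t" by (simp add: s_def t_def fps_compose_add_distrib fps_compose_power[OF u0, symmetric] u0)
    moreover have "t oo u = w + w^2" by (simp add: w_def t_def fps_compose_add_distrib fps_compose_power[OF u0, symmetric])
    ultimately show ?thesis by (simp add: fps_compose_add_distrib fps_compose_mult_distrib[OF u0] fps_compose_sub_distrib)
  qed
  have "(1 - t) * ((w + w^2) - s) = ((1 - t) * (w + w^2) + t) - ((1 - s) * t + s)"
    by (simp add: algebra_simps)
  then have "(1 - t) * ((w + w^2) - s) = 0" using R R2 by simp
  moreover have "1 - t \<noteq> 0"
  proof
    assume "1 - t = 0"
    then have "(1 - t) $ 0 = 0" by simp
    then show False using u0 by (simp add: t_def power2_eq_square)
  qed
  ultimately have "w + w^2 - s = 0" by simp
  then have "(w - fps_X) * (1 + w + fps_X) = 0" by (simp add: s_def algebra_simps power2_eq_square)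
  moreover have "1 + w + fps_X \<noteq> 0"
  proof
    assume "1 + w + fps_X = 0"
    then have "(1 + w + fps_X) $ 0 = 0" by simp
    then show False using w0 by simp
  qed
  ultimately have wX: "w = fps_X" by simp
  have riord: "is_riordan (inverse h ^ n, F)"
    using F0 F1 h0 by (simp add: is_riordan_def fps_nth_power_0)
  show ?thesis
    unfolding h_def[symmetric] pseudo_involution_def LM
    using riord gc wX by (simp add: riordan_mult_def riordan_id_def w_def)
qed

end
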